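(* Let $f:\mathbb{R}^2\to\mathbb{R}^2$ be a Topologically Anosov homeomorphism and let $z\in\mathbb{R}^2$ satisfy $\omega(z)=\emptyset$. Then $\alpha(z)$ is either unbounded or consists of a single periodic orbit.
   Context: A homeomorphism $f:\mathbb{R}^2\to\mathbb{R}^2$ is Topologically Anosov (TA) if: (i) there is a continuous strictly positive $\epsilon:\mathbb{R}^2\to\mathbb{R}$ such that for all $x\neq y$ there is $k\in\mathbb{Z}$ with $\|f^k(x)-f^k(y)\|>\epsilon(f^k(x))$; and (ii) for every continuous strictly positive $\epsilon$ there is a continuous strictly positive $\delta$ such that every $\delta$-pseudo-orbit is $\epsilon$-shadowed by an orbit. A $\delta$-pseudo-orbit is a sequence $(x_n)_{n\in\mathbb{Z}}$ with $\|f(x_n)-x_{n+1}\|<\delta(f(x_n))$; it is $\epsilon$-shadowed by the orbit of $x$ if $\|x_n-f^n(x)\|<\epsilon(x_n)$ for all $n$. $\alpha(z)$ and $\omega(z)$ denote the $\alpha$- and $\omega$-limit sets of $z$ under $f$. *)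

theory Defs
  imports "HOL-Analysis.Analysis"
begin

definition is_homeo :: "(real^2 \<Rightarrow> real^2) \<Rightarrow> bool" where
  "is_homeo f \<longleftrightarrow> (\<exists>g. homeomorphism UNIV UNIV f g)"

definition iter :: "(real^2 \<Rightarrow> real^2) \<Rightarrow> int \<Rightarrow> real^2 \<Rightarrow> real^2" where
  "iter f k = (if 0 \<le> k then f ^^ nat k else (inv f) ^^ nat (- k))"

definition pos_cont :: "(real^2 \<Rightarrow> real) \<Rightarrow> bool" where
  "pos_cont e \<longleftrightarrow> continuous_on UNIV e \<and> (\<forall>x. 0 < e x)"

definition pseudo_orbit :: "(real^2 \<Rightarrow> real^2) \<Rightarrow> (real^2 \<Rightarrow> real) \<Rightarrow> (int \<Rightarrow> real^2) \<Rightarrow> bool" where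
  "pseudo_orbit f \<delta> xs \<longleftrightarrow> (\<forall>n. norm (f (xs n) - xs (n + 1)) < \<delta> (f (xs n)))"

definition shadowed :: "(real^2 \<Rightarrow> real^2) \<Rightarrow> (real^2 \<Rightarrow> real) \<Rightarrow> (int \<Rightarrow> real^2) \<Rightarrow> real^2 \<Rightarrow> bool" where
  "shadowed f \<epsilon> xs x \<longleftrightarrow> (\<forall>n. norm (xs n - iter f n x) < \<epsilon> (xs n))"

definition topologically_anosov :: "(real^2 \<Rightarrow> real^2) \<Rightarrow> bool" where
  "topologically_anosov f \<longleftrightarrow>
     is_homeo f \<and>
     (\<exists>\<epsilon>. pos_cont \<epsilon> \<and>
        (\<forall>x y. x \<noteq> y \<longrightarrow> (\<exists>k. norm (iter f k x - iter f k y) > \<epsilon> (iter f k x)))) \<and>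
     (\<forall>\<epsilon>. pos_cont \<epsilon> \<longrightarrow> (\<exists>\<delta>. pos_cont \<delta> \<and>
        (\<forall>xs. pseudo_orbit f \<delta> xs \<longrightarrow> (\<exists>x. shadowed f \<epsilon> xs x))))"

definition omega_limit :: "(real^2 \<Rightarrow> real^2) \<Rightarrow> real^2 \<Rightarrow> (real^2) set" where
  "omega_limit f z = {y. \<exists>r::nat \<Rightarrow> int. filterlim r at_top sequentially \<and>
                          ((\<lambda>k. iter f (r k) z) \<longlongrightarrow> y) sequentially}"

definition alpha_limit :: "(real^2 \<Rightarrow> real^2) \<Rightarrow> real^2 \<Rightarrow> (real^2) set" where
  "alpha_limit f z = {y. \<exists>r::nat \<Rightarrow> int. filterlim r at_bot sequentially \<and>
                          ((\<lambda>k. iter f (r k) z) \<longlongrightarrow> y) sequentially}"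

definition orbit :: "(real^2 \<Rightarrow> real^2) \<Rightarrow> real^2 \<Rightarrow> (real^2) set" where
  "orbit f p = {iter f k p | k. True}"

definition periodic_point :: "(real^2 \<Rightarrow> real^2) \<Rightarrow> real^2 \<Rightarrow> bool" where
  "periodic_point f p \<longleftrightarrow> (\<exists>n::nat. 0 < n \<and> (f ^^ n) p = p)"

end

theory Submission imports Defs begin


lemma inv_eq_g:
  assumes h: "homeomorphism UNIV UNIV f g"
  shows "inv f = g"
proof
  fix x
  have "\<And>y. g (f y) = y" "\<And>y. f (g y) = y" using h by (auto simp: homeomorphism_def)
  then show "inv f x = g x" by (metis inv_f_f injI)
qed

lemma iter_succ:
  assumes h: "homeomorphism UNIV UNIV f g"
  shows "iter f (k + 1) x = f (iter f k x)"
proof -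
  have gf: "\<And>y. g (f y) = y" and fg: "\<And>y. f (g y) = y" using h by (auto simp: homeomorphism_def)
  have ig: "inv f = g" using inv_eq_g[OF h] .
  consider "0 \<le> k" | "k = -1" | "k < -1" by linarith
  then show ?thesis
  proof cases
    case 1
    then have "nat (k+1) = Suc (nat k)" by simp
    then show ?thesis using 1 by (simp add: iter_def)
  next
    case 2
    then show ?thesis by (simp add: iter_def ig fg)
  next
    case 3
    then have "nat (-k) = Suc (nat (-(k+1)))" by simp
    then have "iter f k x = g (iter f (k+1) x)" using 3 by (simp add: iter_def ig)
    then show ?thesis by (simp add: fg)
  qed
qed

lemma iter_pred:
  assumes h: "homeomorphism UNIV UNIV f g"
  shows "iter f (k - 1) x = g (iter f k x)"
proof -
  have gf: "\<And>y. g (f y) = y" using h by (auto simp: homeomorphism_def)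
  have "iter f k x = f (iter f (k - 1) x)" using iter_succ[OF h, of "k - 1" x] by simp
  then show ?thesis by (simp add: gf)
qed

lemma iter_0[simp]: "iter f 0 x = x" by (simp add: iter_def)

lemma iter_add:
  assumes h: "homeomorphism UNIV UNIV f g"
  shows "iter f (m + n) x = iter f m (iter f n x)"
proof (induction m rule: int_induct[where k=0])
  case base
  then show ?case by simp
next
  case (step1 i)
  have "iter f (i + 1 + n) x = iter f ((i + n) + 1) x" by (simp add: ac_simps)
  also have "\<dots> = f (iter f (i+n) x)" by (rule iter_succ[OF h])
  also have "\<dots> = iter f (i+1) (iter f n x)" using step1 iter_succ[OF h] by simp
  finally show ?case .
next
  case (step2 i)
  have "i - 1 + n = (i + n) - 1" by simp
  then have "iter f (i - 1 + n) x = iter f ((i + n) - 1) x" by metis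
  also have "\<dots> = g (iter f (i+n) x)" by (rule iter_pred[OF h])
  also have "\<dots> = iter f (i - 1) (iter f n x)" using step2 iter_pred[OF h] by simp
  finally show ?case .
qed

lemma iter_1: "iter f 1 x = f x" by (simp add: iter_def)

lemma iter_inj:
  assumes h: "homeomorphism UNIV UNIV f g"
  shows "iter f n x = iter f n y \<longleftrightarrow> x = y"
  by (metis iter_add[OF h] iter_0 add.commute add.right_inverse)

lemma funpow_cont: "continuous_on UNIV (f::'a::topological_space \<Rightarrow> 'a) \<Longrightarrow> continuous_on UNIV (f ^^ n)"
proof (induction n)
  case 0 then show ?case by (simp add: id_def)
next
  case (Suc n)
  then have "continuous_on UNIV (f \<circ> (f ^^ n))"
    by (metis continuous_on_compose continuous_on_subset subset_UNIV)
  then show ?case by simp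
qed

lemma iter_cont:
  assumes h: "homeomorphism UNIV UNIV f g"
  shows "continuous_on UNIV (iter f n)"
proof -
  have cf: "continuous_on UNIV f" and cg: "continuous_on UNIV g" using h by (auto simp: homeomorphism_def)
  show ?thesis using funpow_cont[OF cf] funpow_cont[OF cg] by (simp add: iter_def inv_eq_g[OF h])
qed



lemma lip_construct:
  fixes a :: "'i \<Rightarrow> real^2" and c :: "'i \<Rightarrow> real" and I :: "'i set"
  assumes cpos: "\<forall>i\<in>I. 0 < c i"
  and loc: "\<forall>q. \<exists>m>0. \<forall>i\<in>I. dist q (a i) < 1 \<longrightarrow> m \<le> c i"
  shows "\<exists>h. pos_cont h \<and> (\<forall>x y. h x \<le> h y + dist x y) \<and>
             (\<forall>q. \<forall>i\<in>I. h q \<le> c i + dist q (a i)) \<and> (\<forall>q. h q \<le> 1)"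
proof -
  define S where "S q = insert 1 ((\<lambda>i. c i + dist q (a i)) ` I)" for q
  define h where "h q = Inf (S q)" for q
  have bdd: "bdd_below (S q)" for q
    unfolding S_def using cpos
    by (intro bdd_belowI[where m=0]) (auto intro: add_nonneg_nonneg less_imp_le)
  have ne: "S q \<noteq> {}" for q unfolding S_def by simp
  have h1: "h q \<le> 1" for q unfolding h_def by (rule cInf_lower[OF _ bdd]) (simp add: S_def)
  have hc: "h q \<le> c i + dist q (a i)" if "i \<in> I" for q i
    unfolding h_def by (rule cInf_lower[OF _ bdd]) (use that in \<open>simp add: S_def\<close>)
  have lip: "h x \<le> h y + dist x y" for x y
  proof -
    have "h x - dist x y \<le> h y"
      unfolding h_def[of y]
    proof (rule cInf_greatest[OF ne])
      fix t assume "t \<in> S y"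
      then consider "t = 1" | i where "i \<in> I" "t = c i + dist y (a i)" unfolding S_def by auto
      then show "h x - dist x y \<le> t"
      proof cases
        case 1 then show ?thesis using h1[of x] zero_le_dist[of x y] by linarith
      next
        case 2
        have "dist x (a i) \<le> dist x y + dist y (a i)" by (rule dist_triangle)
        then show ?thesis using hc[OF 2(1), of x] 2(2) by linarith
      qed
    qed
    then show ?thesis by linarith
  qed
  have pos: "0 < h q" for q
  proof -
    obtain m where m: "m > 0" "\<forall>i\<in>I. dist q (a i) < 1 \<longrightarrow> m \<le> c i" using loc by blast
    have "min m 1 \<le> h q"
      unfolding h_def
    proof (rule cInf_greatest[OF ne])
      fix t assume "t \<in> S q"
      then consider "t = 1" | i where "i \<in> I" "t = c i + dist q (a i)" unfolding S_def by auto
      then show "min m 1 \<le> t"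
      proof cases
        case 1 then show ?thesis by simp
      next
        case 2
        show ?thesis
        proof (cases "dist q (a i) < 1")
          case True
          then have "m \<le> c i" using m 2 by blast
          then show ?thesis using 2 zero_le_dist[of q "a i"] by linarith
        next
          case False
          then show ?thesis using 2 cpos by force
        qed
      qed
    qed
    then show ?thesis using m by linarith
  qed
  have "1-lipschitz_on UNIV h"
    unfolding lipschitz_on_def
  proof (intro conjI ballI)
    fix x y :: "real^2"
    show "dist (h x) (h y) \<le> 1 * dist x y"
      using lip[of x y] lip[of y x] by (simp add: dist_real_def dist_commute abs_le_iff)
  qed simp
  then have "continuous_on UNIV h" by (rule lipschitz_on_continuous_on)
  then show ?thesis using pos lip hc h1 unfolding pos_cont_def by blast
qed



lemma lip_minorant:
  assumes "pos_cont g"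
  shows "\<exists>h. pos_cont h \<and> (\<forall>x y. h x \<le> h y + dist x y) \<and> (\<forall>q. h q \<le> g q)"
proof -
  have gc: "continuous_on UNIV g" and gp: "\<forall>x. 0 < g x" using assms by (auto simp: pos_cont_def)
  have loc: "\<forall>q. \<exists>m>0. \<forall>i\<in>UNIV. dist q ((\<lambda>x. x) i) < 1 \<longrightarrow> m \<le> g i"
  proof
    fix q :: "real^2"
    have ne: "cball q 1 \<noteq> {}" by simp
    have "continuous_on (cball q 1) g" using gc continuous_on_subset by blast
    then obtain x0 where x0: "x0 \<in> cball q 1" "\<forall>y\<in>cball q 1. g x0 \<le> g y"
      using continuous_attains_inf[OF compact_cball ne] by blast
    have "\<forall>i\<in>UNIV. dist q ((\<lambda>x. x) i) < 1 \<longrightarrow> g x0 \<le> g i"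
      using x0(2) by (simp add: mem_cball)
    then show "\<exists>m>0. \<forall>i\<in>UNIV. dist q ((\<lambda>x. x) i) < 1 \<longrightarrow> m \<le> g i"
      using gp by blast
  qed
  obtain h where h: "pos_cont h" "\<forall>x y. h x \<le> h y + dist x y" "\<forall>q. \<forall>i\<in>UNIV. h q \<le> g i + dist q ((\<lambda>x. x) i)"
    using lip_construct[of UNIV g "\<lambda>x. x", OF _ loc] gp by blast
  have "\<forall>q. h q \<le> g q"
  proof
    fix q show "h q \<le> g q" using h(3) by (metis UNIV_I add.right_neutral dist_self)
  qed
  then show ?thesis using h by blast
qed

lemma neg_at_bot:
  fixes g :: "nat \<Rightarrow> int"
  assumes "filterlim g at_top sequentially"
  shows "filterlim (\<lambda>k. - g k) at_bot sequentially"
  unfolding filterlim_at_bot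
proof
  fix Z :: int
  have "eventually (\<lambda>k. - Z \<le> g k) sequentially" using assms unfolding filterlim_at_top by blast
  then show "eventually (\<lambda>k. - g k \<le> Z) sequentially" by (rule eventually_mono) simp
qed

lemma fwd_escape:
  assumes "omega_limit f z = {}"
  shows "finite {n::nat. norm (iter f (int n) z) \<le> R}"
proof (rule ccontr)
  assume "infinite {n::nat. norm (iter f (int n) z) \<le> R}"
  from infinite_enumerate[OF this] obtain r :: "nat \<Rightarrow> nat" where r: "strict_mono r" "\<forall>n. r n \<in> {n::nat. norm (iter f (int n) z) \<le> R}"
    by (elim exE conjE)
  define s where "s k = iter f (int (r k)) z" for k
  have "\<forall>k. norm (s k) \<le> R" using r(2) unfolding s_def by simp
  then have "bounded (range s)" unfolding bounded_iff by blast
  then obtain l t where lt: "strict_mono t" "(s \<circ> t) \<longlonglongrightarrow> l"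
    using bounded_imp_convergent_subsequence by blast
  have "filterlim (r \<circ> t) sequentially sequentially"
    using r(1) lt(1) by (intro filterlim_subseq strict_mono_o)
  from filterlim_compose[OF filterlim_int_sequentially this]
  have A: "filterlim (\<lambda>k. int ((r \<circ> t) k)) at_top sequentially" .
  have B: "(\<lambda>k. iter f (int ((r \<circ> t) k)) z) \<longlonglongrightarrow> l"
    using lt(2) unfolding s_def o_def by simp
  have "l \<in> omega_limit f z"
    unfolding omega_limit_def using A B by blast
  then show False using assms by simp
qed

lemma bwd_escape:
  assumes "alpha_limit f z = {}"
  shows "finite {n::nat. norm (iter f (- int n) z) \<le> R}"
proof (rule ccontr)
  assume "infinite {n::nat. norm (iter f (- int n) z) \<le> R}"
  from infinite_enumerate[OF this] obtain r :: "nat \<Rightarrow> nat" where r: "strict_mono r" "\<forall>n. r n \<in> {n::nat. norm (iter f (- int n) z) \<le> R}"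
    by (elim exE conjE)
  define s where "s k = iter f (- int (r k)) z" for k
  have "\<forall>k. norm (s k) \<le> R" using r(2) unfolding s_def by simp
  then have "bounded (range s)" unfolding bounded_iff by blast
  then obtain l t where lt: "strict_mono t" "(s \<circ> t) \<longlonglongrightarrow> l"
    using bounded_imp_convergent_subsequence by blast
  have "filterlim (r \<circ> t) sequentially sequentially"
    using r(1) lt(1) by (intro filterlim_subseq strict_mono_o)
  from filterlim_compose[OF filterlim_int_sequentially this]
  have "filterlim (\<lambda>k. int ((r \<circ> t) k)) at_top sequentially" .
  from neg_at_bot[OF this]
  have A: "filterlim (\<lambda>k. - int ((r \<circ> t) k)) at_bot sequentially" .
  have B: "(\<lambda>k. iter f (- int ((r \<circ> t) k)) z) \<longlonglongrightarrow> l"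
    using lt(2) unfolding s_def o_def by simp
  have "l \<in> alpha_limit f z"
    unfolding alpha_limit_def using A B by blast
  then show False using assms by simp
qed



lemma c_exists:
  assumes h: "homeomorphism UNIV UNIV f g"
  shows "\<exists>c::int \<Rightarrow> real. \<forall>n. 0 < c n \<and> c n \<le> 1 \<and>
     (\<forall>w. 1 / (\<bar>real_of_int n\<bar> + 1) \<le> dist w z \<and> dist w z \<le> 1 \<longrightarrow> c n \<le> dist (iter f n w) (iter f n z))"
proof -
  have "\<exists>c. 0 < c \<and> c \<le> 1 \<and>
     (\<forall>w. 1 / (\<bar>real_of_int n\<bar> + 1) \<le> dist w z \<and> dist w z \<le> 1 \<longrightarrow> c \<le> dist (iter f n w) (iter f n z))" for n
  proof -
    define K where "K = cball z 1 - ball z (1 / (\<bar>real_of_int n\<bar> + 1))"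
    have memK: "w \<in> K \<longleftrightarrow> 1 / (\<bar>real_of_int n\<bar> + 1) \<le> dist w z \<and> dist w z \<le> 1" for w
      unfolding K_def by (auto simp: dist_commute)
    have cK: "compact K" unfolding K_def by (intro compact_diff compact_cball open_ball)
    show ?thesis
    proof (cases "K = {}")
      case True
      then show ?thesis using memK by (intro exI[of _ 1]) auto
    next
      case False
      have "continuous_on UNIV (\<lambda>w. dist (iter f n w) (iter f n z))"
        using iter_cont[OF h, of n] by (intro continuous_on_dist continuous_on_const) auto
      then have "continuous_on K (\<lambda>w. dist (iter f n w) (iter f n z))"
        using continuous_on_subset by blast
      then obtain x0 where x0: "x0 \<in> K" "\<forall>y\<in>K. dist (iter f n x0) (iter f n z) \<le> dist (iter f n y) (iter f n z)"
        using continuous_attains_inf[OF cK False] by blast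
      have "0 < 1 / (\<bar>real_of_int n\<bar> + 1)" by simp
      then have "x0 \<noteq> z" using memK[of x0] x0(1) by auto
      then have "iter f n x0 \<noteq> iter f n z" using iter_inj[OF h] by blast
      then have pos: "0 < dist (iter f n x0) (iter f n z)" by simp
      show ?thesis
        using pos x0(2) memK
        by (intro exI[of _ "min 1 (dist (iter f n x0) (iter f n z))"]) force
    qed
  qed
  then show ?thesis by metis
qed

lemma rigidity:
  assumes h: "homeomorphism UNIV UNIV f g"
    and cprop: "\<forall>n. (\<forall>w. 1 / (\<bar>real_of_int n\<bar> + 1) \<le> dist w z \<and> dist w z \<le> 1 \<longrightarrow> c n \<le> dist (iter f n w) (iter f n z))"
    and T: "\<forall>N::nat. \<exists>n\<in>T. real N \<le> \<bar>real_of_int n\<bar>"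
    and close: "\<forall>n\<in>T. dist (iter f n y) (iter f n z) < c n"
    and d1: "dist y z \<le> 1"
  shows "y = z"
proof (rule ccontr)
  assume "y \<noteq> z"
  then have dpos: "0 < dist y z" by simp
  obtain N :: nat where N: "1 / dist y z < real N" using reals_Archimedean2 by blast
  obtain n where n: "n \<in> T" "real N \<le> \<bar>real_of_int n\<bar>" using T by blast
  have "1 / dist y z < \<bar>real_of_int n\<bar> + 1" using N n(2) by linarith
  then have "1 / (\<bar>real_of_int n\<bar> + 1) < dist y z" using dpos
    by (smt (verit) divide_less_eq mult.commute nonzero_mult_div_cancel_left)
  then have "c n \<le> dist (iter f n y) (iter f n z)" using cprop d1 by auto
  then show False using close n(1) by force
qed



lemma no_double_escape:
  assumes TA: "topologically_anosov f"
    and om: "omega_limit f z = {}" and al: "alpha_limit f z = {}"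
  shows False
proof -
  obtain g where h: "homeomorphism UNIV UNIV f g" using TA unfolding topologically_anosov_def is_homeo_def by blast
  obtain c :: "int \<Rightarrow> real" where c: "\<forall>n. 0 < c n \<and> c n \<le> 1 \<and>
     (\<forall>w. 1 / (\<bar>real_of_int n\<bar> + 1) \<le> dist w z \<and> dist w z \<le> 1 \<longrightarrow> c n \<le> dist (iter f n w) (iter f n z))"
    using c_exists[OF h] by blast
  define a where "a n = iter f n z" for n
  have loc: "\<forall>q. \<exists>m>0. \<forall>i\<in>UNIV. dist q (a i) < 1 \<longrightarrow> m \<le> c i"
  proof
    fix q :: "real^2"
    define F where "F = {i. dist q (a i) < 1}"
    have "F \<subseteq> int ` {n. norm (iter f (int n) z) \<le> norm q + 1} \<union> (\<lambda>n. - int n) ` {n. norm (iter f (- int n) z) \<le> norm q + 1}"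
    proof
      fix i assume "i \<in> F"
      then have "dist q (a i) < 1" by (simp add: F_def)
      moreover have "norm (a i) \<le> norm q + dist q (a i)"
        by (metis dist_commute dist_norm norm_triangle_sub add.commute)
      ultimately have nb: "norm (iter f i z) \<le> norm q + 1" unfolding a_def by linarith
      show "i \<in> int ` {n. norm (iter f (int n) z) \<le> norm q + 1} \<union> (\<lambda>n. - int n) ` {n. norm (iter f (- int n) z) \<le> norm q + 1}"
      proof (cases "0 \<le> i")
        case True
        then have "i = int (nat i)" by simp
        then show ?thesis using nb by (metis (mono_tags, lifting) UnI1 image_eqI mem_Collect_eq)
      next
        case False
        then have "i = - int (nat (- i))" by simp
        then show ?thesis using nb by (metis (mono_tags, lifting) UnI2 image_eqI mem_Collect_eq)
      qed
    qed
    moreover have "finite (int ` {n. norm (iter f (int n) z) \<le> norm q + 1} \<union> (\<lambda>n. - int n) ` {n. norm (iter f (- int n) z) \<le> norm q + 1})"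
      using fwd_escape[OF om] bwd_escape[OF al] by blast
    ultimately have fF: "finite F" by (rule finite_subset)
    define m where "m = Min (insert 1 (c ` F))"
    have "m \<in> insert 1 (c ` F)" unfolding m_def using fF by (intro Min_in) auto
    then have "m > 0" using c by auto
    moreover have "\<forall>i\<in>UNIV. dist q (a i) < 1 \<longrightarrow> m \<le> c i"
      unfolding m_def using fF by (auto simp: F_def)
    ultimately show "\<exists>m>0. \<forall>i\<in>UNIV. dist q (a i) < 1 \<longrightarrow> m \<le> c i" by blast
  qed
  obtain hR where hR: "pos_cont hR" "\<forall>x y. hR x \<le> hR y + dist x y" "\<forall>q. \<forall>i\<in>UNIV. hR q \<le> c i + dist q (a i)"
    using lip_construct[of UNIV c a, OF _ loc] c by blast
  define \<epsilon> where "\<epsilon> q = hR q / 2" for q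
  have eps: "pos_cont \<epsilon>" using hR(1) unfolding pos_cont_def \<epsilon>_def
    by (auto intro!: continuous_intros)
  obtain \<delta> where dl: "pos_cont \<delta>" "\<forall>xs. pseudo_orbit f \<delta> xs \<longrightarrow> (\<exists>x. shadowed f \<epsilon> xs x)"
    using TA eps unfolding topologically_anosov_def by blast
  have K1: "dist q (a n) < c n" if "dist q (a n) < \<epsilon> q" for q n
  proof -
    have "hR q \<le> c n + dist q (a n)" using hR(3) by blast
    then show ?thesis using that unfolding \<epsilon>_def by linarith
  qed
  have K2: "dist q (a n) < c n" if "dist (a n) q < \<epsilon> (a n)" for q n
  proof -
    have "hR (a n) \<le> c n + dist (a n) (a n)" using hR(3) by blast
    then have "hR (a n) \<le> c n" by simp
    moreover have "dist (a n) q = dist q (a n)" by (simp add: dist_commute)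
    ultimately show ?thesis using that zero_le_dist[of q "a n"] unfolding \<epsilon>_def by linarith
  qed
  have dc: "continuous_on UNIV \<delta>" and dp: "\<forall>x. 0 < \<delta> x" using dl(1) by (auto simp: pos_cont_def)
  have "isCont \<delta> z" using dc by (simp add: continuous_on_eq_continuous_at)
  then obtain \<rho> where rho: "\<rho> > 0" "\<forall>w. dist w z < \<rho> \<longrightarrow> dist (\<delta> w) (\<delta> z) < \<delta> z / 2"
    using dp unfolding continuous_at_eps_delta by (metis half_gt_zero)
  define d where "d = min (min \<rho> (\<delta> z / 2)) 1 / 2"
  have dpos: "d > 0" unfolding d_def using rho dp by auto
  obtain e :: "real^2" where e: "norm e = d" using vector_choose_size dpos by (metis less_imp_le)
  define w where "w = z + e"
  have dwz: "dist w z = d" unfolding w_def using e by (simp add: dist_norm)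
  have wz: "w \<noteq> z" using dwz dpos by auto
  have w1: "dist w z \<le> 1" using dwz unfolding d_def by auto
  have "dist (\<delta> w) (\<delta> z) < \<delta> z / 2" using rho dwz unfolding d_def by auto
  then have "\<delta> w > \<delta> z / 2" unfolding dist_real_def by arith
  moreover have "d \<le> \<delta> z / 4" unfolding d_def by auto
  moreover have "\<delta> z > 0" using dp by blast
  ultimately have wd: "dist w z < \<delta> w" using dwz by linarith
  define xs where "xs n = (if 0 \<le> n then a n else iter f n w)" for n
  have po: "pseudo_orbit f \<delta> xs"
    unfolding pseudo_orbit_def
  proof
    fix n :: int
    consider "0 \<le> n" | "n = -1" | "n < -1" by linarith
    then show "norm (f (xs n) - xs (n + 1)) < \<delta> (f (xs n))"
    proof cases
      case 1
      then show ?thesis using dp by (simp add: xs_def a_def iter_succ[OF h])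
    next
      case 2
      have "f (xs n) = w" using 2 iter_succ[OF h, of "-1" w] by (simp add: xs_def)
      then show ?thesis using 2 wd by (simp add: xs_def a_def dist_norm)
    next
      case 3
      then show ?thesis using dp by (simp add: xs_def a_def iter_succ[OF h])
    qed
  qed
  then obtain y where y: "shadowed f \<epsilon> xs y" using dl(2) by blast
  have yc: "dist (iter f n y) (iter f n z) < c n" if "0 \<le> n" for n
  proof -
    have "norm (xs n - iter f n y) < \<epsilon> (xs n)" using y by (simp add: shadowed_def)
    then have "dist (a n) (iter f n y) < \<epsilon> (a n)" using that by (simp add: xs_def dist_norm)
    then show ?thesis using K2 unfolding a_def by blast
  qed
  have "y = z"
  proof (rule rigidity[OF h, where c=c and T="{n. 0 \<le> n}"])
    show "\<forall>n. \<forall>w. 1 / (\<bar>real_of_int n\<bar> + 1) \<le> dist w z \<and> dist w z \<le> 1 \<longrightarrow> c n \<le> dist (iter f n w) (iter f n z)"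
      using c by blast
    show "\<forall>N::nat. \<exists>n\<in>{n. 0 \<le> n}. real N \<le> \<bar>real_of_int n\<bar>"
      by (intro allI bexI[of _ "int N" for N]) auto
    show "\<forall>n\<in>{n. 0 \<le> n}. dist (iter f n y) (iter f n z) < c n" using yc by blast
    have "dist y z < c 0" using yc[of 0] by simp
    moreover have "c 0 \<le> 1" using c by blast
    ultimately show "dist y z \<le> 1" by linarith
  qed
  have wc: "dist (iter f n w) (iter f n z) < c n" if "n < 0" for n
  proof -
    have "norm (xs n - iter f n y) < \<epsilon> (xs n)" using y by (simp add: shadowed_def)
    then have "dist (iter f n w) (a n) < \<epsilon> (iter f n w)" using that \<open>y = z\<close> by (simp add: xs_def a_def dist_norm)
    then show ?thesis using K1 unfolding a_def by blast
  qed
  have "w = z"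
  proof (rule rigidity[OF h, where c=c and T="{n. n < 0}"])
    show "\<forall>n. \<forall>w. 1 / (\<bar>real_of_int n\<bar> + 1) \<le> dist w z \<and> dist w z \<le> 1 \<longrightarrow> c n \<le> dist (iter f n w) (iter f n z)"
      using c by blast
    show "\<forall>N::nat. \<exists>n\<in>{n. n < 0}. real N \<le> \<bar>real_of_int n\<bar>"
    proof
      fix N :: nat
      show "\<exists>n\<in>{n. n < 0}. real N \<le> \<bar>real_of_int n\<bar>" by (rule bexI[of _ "- int N - 1"]) auto
    qed
    show "\<forall>n\<in>{n. n < 0}. dist (iter f n w) (iter f n z) < c n" using wc by blast
    show "dist w z \<le> 1" using w1 .
  qed
  then show False using wz by simp
qed



lemma phi_bounds: "(P::int) > 0 \<Longrightarrow> u \<le> u + (n - u) mod P \<and> u + (n - u) mod P < u + P"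
  by simp

lemma phi_succ:
  assumes "(P::int) > 0"
  shows "u + (n + 1 - u) mod P = (if u + (n - u) mod P + 1 < u + P then u + (n - u) mod P + 1 else u)"
proof -
  have "n + 1 - u = (n - u) + 1" by simp
  then have "(n + 1 - u) mod P = ((n - u) mod P + 1) mod P" by (metis mod_add_left_eq)
  moreover have "0 \<le> (n - u) mod P" "(n - u) mod P < P" using assms by auto
  ultimately show ?thesis
  proof (cases "(n - u) mod P + 1 < P")
    case True
    then show ?thesis using \<open>(n + 1 - u) mod P = ((n - u) mod P + 1) mod P\<close> \<open>0 \<le> (n - u) mod P\<close>
      by (simp add: mod_pos_pos_trivial)
  next
    case False
    then have "(n - u) mod P + 1 = P" using \<open>(n - u) mod P < P\<close> by linarith
    then show ?thesis using \<open>(n + 1 - u) mod P = ((n - u) mod P + 1) mod P\<close> False by simp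
  qed
qed

lemma phi_shift:
  "u + (n + t - u) mod (P::int) = u + ((u + (n - u) mod P) + t - u) mod P"
proof -
  have "(n + t - u) mod P = ((n - u) + t) mod P" by (simp add: algebra_simps)
  also have "\<dots> = ((n - u) mod P + t) mod P" by (simp add: mod_simps)
  finally show ?thesis by simp
qed

lemma phi_P: "u + (n + P - u) mod (P::int) = u + (n - u) mod P"
proof -
  have "(n + P - u) mod P = ((n - u) + P) mod P" by (simp add: algebra_simps)
  then show ?thesis by simp
qed

lemma phi_id: "(u::int) \<le> n \<Longrightarrow> n < u + P \<Longrightarrow> u + (n - u) mod P = n"
  by (simp add: mod_pos_pos_trivial)

lemma phi_decomp: "n = (u + (n - u) mod P) + (P::int) * ((n - u) div P)"
  by (metis add.commute add.left_commute diff_add_cancel mult_div_mod_eq)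

lemma iter_periodic:
  assumes h: "homeomorphism UNIV UNIV f g" and per: "iter f P y = y"
  shows "iter f (m + P * j) y = iter f m y"
proof (induction j rule: int_induct[where k=0])
  case base then show ?case by simp
next
  case (step1 i)
  have "iter f (m + P * (i + 1)) y = iter f (m + P * i) (iter f P y)"
    by (metis iter_add[OF h] distrib_left mult.right_neutral add.assoc)
  then show ?case using step1 per by simp
next
  case (step2 i)
  have "iter f (m + P * i) y = iter f (m + P * (i - 1)) (iter f P y)"
    using iter_add[OF h, of "m + P * (i - 1)" P y] by (simp add: algebra_simps)
  then show ?case using step2 per by simp
qed

lemma iter_tendsto:
  assumes h: "homeomorphism UNIV UNIV f g" and lim: "(\<lambda>k. s k) \<longlonglongrightarrow> x"
  shows "(\<lambda>k. iter f t (s k)) \<longlonglongrightarrow> iter f t x"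
proof -
  have "isCont (iter f t) x" using iter_cont[OF h, of t] by (simp add: continuous_on_eq_continuous_at)
  then show ?thesis using lim isCont_tendsto_compose by blast
qed

lemma at_bot_shift:
  fixes r :: "nat \<Rightarrow> int"
  assumes "filterlim r at_bot sequentially"
  shows "filterlim (\<lambda>k. r k + t) at_bot sequentially"
  unfolding filterlim_at_bot
proof
  fix Z :: int
  have "eventually (\<lambda>k. r k \<le> Z - t) sequentially" using assms unfolding filterlim_at_bot by blast
  then show "eventually (\<lambda>k. r k + t \<le> Z) sequentially" by (rule eventually_mono) simp
qed

lemma alpha_invariant:
  assumes h: "homeomorphism UNIV UNIV f g" and x: "x \<in> alpha_limit f z"
  shows "iter f t x \<in> alpha_limit f z"
proof -
  obtain r where r: "filterlim r at_bot sequentially" "(\<lambda>k. iter f (r k) z) \<longlonglongrightarrow> x"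
    using x unfolding alpha_limit_def by blast
  have "(\<lambda>k. iter f t (iter f (r k) z)) \<longlonglongrightarrow> iter f t x" by (rule iter_tendsto[OF h r(2)])
  then have "(\<lambda>k. iter f (r k + t) z) \<longlonglongrightarrow> iter f t x"
    by (simp add: iter_add[OF h] add.commute)
  then show ?thesis unfolding alpha_limit_def using at_bot_shift[OF r(1)] by blast
qed



lemma case_B:
  assumes TA: "topologically_anosov f"
    and om: "omega_limit f z = {}" and x0: "x0 \<in> alpha_limit f z"
  shows "\<exists>p. periodic_point f p \<and> alpha_limit f z = orbit f p"
proof -
  obtain g where h: "homeomorphism UNIV UNIV f g" using TA unfolding topologically_anosov_def is_homeo_def by blast
  obtain c :: "int \<Rightarrow> real" where c: "\<forall>n. 0 < c n \<and> c n \<le> 1 \<and>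
     (\<forall>w. 1 / (\<bar>real_of_int n\<bar> + 1) \<le> dist w z \<and> dist w z \<le> 1 \<longrightarrow> c n \<le> dist (iter f n w) (iter f n z))"
    using c_exists[OF h] by blast
  define a where "a n = iter f n z" for n
  have loc: "\<forall>q. \<exists>m>0. \<forall>i\<in>{n. 0 \<le> n}. dist q (a i) < 1 \<longrightarrow> m \<le> c i"
  proof
    fix q :: "real^2"
    define F where "F = {i. 0 \<le> i \<and> dist q (a i) < 1}"
    have "F \<subseteq> int ` {n. norm (iter f (int n) z) \<le> norm q + 1}"
    proof
      fix i assume "i \<in> F"
      then have "dist q (a i) < 1" "0 \<le> i" by (auto simp add: F_def)
      moreover have "norm (a i) \<le> norm q + dist q (a i)"
        by (metis dist_commute dist_norm norm_triangle_sub add.commute)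
      ultimately have nb: "norm (iter f i z) \<le> norm q + 1" unfolding a_def by linarith
      have "i = int (nat i)" using \<open>0 \<le> i\<close> by simp
      then show "i \<in> int ` {n. norm (iter f (int n) z) \<le> norm q + 1}"
        using nb by (metis (mono_tags, lifting) image_eqI mem_Collect_eq)
    qed
    moreover have "finite (int ` {n. norm (iter f (int n) z) \<le> norm q + 1})"
      using fwd_escape[OF om] by blast
    ultimately have fF: "finite F" by (rule finite_subset)
    define m where "m = Min (insert 1 (c ` F))"
    have "m \<in> insert 1 (c ` F)" unfolding m_def using fF by (intro Min_in) auto
    then have "m > 0" using c by auto
    moreover have "\<forall>i\<in>{n. 0 \<le> n}. dist q (a i) < 1 \<longrightarrow> m \<le> c i"
      unfolding m_def using fF by (auto simp: F_def)
    ultimately show "\<exists>m>0. \<forall>i\<in>{n. 0 \<le> n}. dist q (a i) < 1 \<longrightarrow> m \<le> c i" by blast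
  qed
  obtain hR where hR: "pos_cont hR" "\<forall>x y. hR x \<le> hR y + dist x y" "\<forall>q. \<forall>i\<in>{n. 0 \<le> n}. hR q \<le> c i + dist q (a i)"
    using lip_construct[of "{n. 0 \<le> n}" c a, OF _ loc] c by blast
  obtain \<epsilon>0 where e0: "pos_cont \<epsilon>0" "\<forall>x y. x \<noteq> y \<longrightarrow> (\<exists>k. norm (iter f k x - iter f k y) > \<epsilon>0 (iter f k x))"
    using TA unfolding topologically_anosov_def by blast
  obtain h0 where h0: "pos_cont h0" "\<forall>x y. h0 x \<le> h0 y + dist x y" "\<forall>q. h0 q \<le> \<epsilon>0 q"
    using lip_minorant[OF e0(1)] by blast
  define \<epsilon> where "\<epsilon> q = min (h0 q / 8) (hR q / 2)" for q
  have eps: "pos_cont \<epsilon>" using hR(1) h0(1) unfolding pos_cont_def \<epsilon>_def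
    by (auto intro!: continuous_intros)
  have epos: "0 < \<epsilon> q" for q using eps by (simp add: pos_cont_def)
  have E1: "8 * \<epsilon> q \<le> h0 q" for q unfolding \<epsilon>_def by linarith
  obtain \<delta> where dl: "pos_cont \<delta>" "\<forall>xs. pseudo_orbit f \<delta> xs \<longrightarrow> (\<exists>x. shadowed f \<epsilon> xs x)"
    using TA eps unfolding topologically_anosov_def by blast
  have dc: "continuous_on UNIV \<delta>" and dp: "\<forall>x. 0 < \<delta> x" using dl(1) by (auto simp: pos_cont_def)
  have K2: "dist q (a n) < c n" if "0 \<le> n" "dist (a n) q < \<epsilon> (a n)" for q n
  proof -
    have "hR (a n) \<le> c n + dist (a n) (a n)" using hR(3) that(1) by blast
    then have "hR (a n) \<le> c n" by simp
    moreover have "dist (a n) q = dist q (a n)" by (simp add: dist_commute)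
    moreover have "\<epsilon> (a n) \<le> hR (a n) / 2" unfolding \<epsilon>_def by linarith
    ultimately show ?thesis using that zero_le_dist[of q "a n"] by linarith
  qed
  have EXP: "x = y" if H: "\<forall>t. \<exists>b. dist (iter f t x) b \<le> \<epsilon> b \<and> dist (iter f t x) (iter f t y) \<le> 2 * \<epsilon> b" for x y
  proof (rule ccontr)
    assume "x \<noteq> y"
    then obtain k where k: "norm (iter f k x - iter f k y) > \<epsilon>0 (iter f k x)" using e0(2) by blast
    obtain b where b: "dist (iter f k x) b \<le> \<epsilon> b" "dist (iter f k x) (iter f k y) \<le> 2 * \<epsilon> b" using H by blast
    have "h0 b \<le> h0 (iter f k x) + dist b (iter f k x)" using h0(2) by blast
    moreover have "dist b (iter f k x) = dist (iter f k x) b" by (simp add: dist_commute)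
    ultimately have "7 * \<epsilon> b \<le> \<epsilon>0 (iter f k x)" using E1[of b] b(1) h0(3)[rule_format, of "iter f k x"] by linarith
    then show False using k b(2) epos[of b] by (simp add: dist_norm)
  qed
  obtain r where r: "filterlim r at_bot sequentially" "(\<lambda>k. iter f (r k) z) \<longlonglongrightarrow> x0"
    using x0 unfolding alpha_limit_def by blast
  have dx0: "\<delta> x0 > 0" using dp by blast
  have "isCont \<delta> x0" using dc by (simp add: continuous_on_eq_continuous_at)
  then have "(\<lambda>k. \<delta> (a (r k))) \<longlonglongrightarrow> \<delta> x0" using r(2) isCont_tendsto_compose unfolding a_def by blast
  then have ev1: "eventually (\<lambda>k. dist (\<delta> (a (r k))) (\<delta> x0) < \<delta> x0 / 2) sequentially"
    using dx0 tendstoD by (metis half_gt_zero)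
  have ev2: "eventually (\<lambda>k. dist (a (r k)) x0 < \<delta> x0 / 4) sequentially"
    using r(2) dx0 tendstoD unfolding a_def by (metis divide_pos_pos zero_less_numeral)
  have ev3: "eventually (\<lambda>k. r k \<le> 0) sequentially" using r(1) unfolding filterlim_at_bot by blast
  have "eventually (\<lambda>k. dist (\<delta> (a (r k))) (\<delta> x0) < \<delta> x0 / 2 \<and> dist (a (r k)) x0 < \<delta> x0 / 4 \<and> r k \<le> 0) sequentially"
    using ev1 ev2 ev3 by (simp add: eventually_conj_iff)
  then obtain N where N: "\<forall>k\<ge>N. dist (\<delta> (a (r k))) (\<delta> x0) < \<delta> x0 / 2 \<and> dist (a (r k)) x0 < \<delta> x0 / 4 \<and> r k \<le> 0"
    unfolding eventually_sequentially by blast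
  define v where "v = r N"
  have "eventually (\<lambda>k. r k \<le> v - 1) sequentially" using r(1) unfolding filterlim_at_bot by blast
  then obtain N2 where N2: "\<forall>k\<ge>N2. r k \<le> v - 1" unfolding eventually_sequentially by blast
  define u where "u = r (max N N2)"
  have uv: "u < v" using N2 unfolding u_def by force
  have v0: "v \<le> 0" using N unfolding v_def by blast
  have "dist (\<delta> (a v)) (\<delta> x0) < \<delta> x0 / 2" "dist (a v) x0 < \<delta> x0 / 4" "dist (a u) x0 < \<delta> x0 / 4"
    using N unfolding u_def v_def by auto
  then have j1: "\<delta> (a v) > \<delta> x0 / 2" "dist (a v) x0 + dist x0 (a u) < \<delta> x0 / 2"
    unfolding dist_real_def by (simp_all add: dist_commute, arith)
  have jump: "dist (a v) (a u) < \<delta> (a v)"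
    using dist_triangle[of "a v" "a u" x0] j1 by linarith
  define P where "P = v - u"
  have Ppos: "P > 0" and vP: "v = u + P" using uv unfolding P_def by auto
  define \<phi> where "\<phi> n = u + (n - u) mod P" for n
  define ys where "ys n = a (\<phi> n)" for n
  define xs where "xs n = (if v \<le> n then a n else ys n)" for n
  have fa: "f (a n) = a (n + 1)" for n unfolding a_def using iter_succ[OF h] by simp
  have phib: "u \<le> \<phi> n \<and> \<phi> n < v" for n unfolding \<phi>_def vP using Ppos by simp
  have ys_step: "norm (f (ys n) - ys (n + 1)) < \<delta> (f (ys n))" for n
  proof (cases "\<phi> n + 1 < v")
    case True
    then have "\<phi> (n + 1) = \<phi> n + 1" using phi_succ[OF Ppos, of u n] unfolding \<phi>_def vP by simp
    then show ?thesis using dp by (simp add: ys_def fa)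
  next
    case False
    then have "\<phi> (n + 1) = u" using phi_succ[OF Ppos, of u n] unfolding \<phi>_def vP by simp
    moreover have "\<phi> n + 1 = v" using False phib[of n] by linarith
    ultimately show ?thesis using jump by (simp add: ys_def fa dist_norm)
  qed
  have po_ys: "pseudo_orbit f \<delta> ys" unfolding pseudo_orbit_def using ys_step by blast
  have po_xs: "pseudo_orbit f \<delta> xs" unfolding pseudo_orbit_def
  proof
    fix n :: int
    consider "v \<le> n" | "n = v - 1" | "n < v - 1" by linarith
    then show "norm (f (xs n) - xs (n + 1)) < \<delta> (f (xs n))"
    proof cases
      case 1 then show ?thesis using dp by (simp add: xs_def fa)
    next
      case 2
      have "\<phi> (v - 1) = v - 1" unfolding \<phi>_def using phi_id[of u "v - 1" P] uv vP by simp
      then have "xs n = a (v - 1)" using 2 by (simp add: xs_def ys_def)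
      then show ?thesis using 2 dp by (simp add: xs_def fa)
    next
      case 3 then show ?thesis using ys_step[of n] by (simp add: xs_def)
    qed
  qed
  obtain y1 where y1: "shadowed f \<epsilon> xs y1" using dl(2) po_xs by blast
  obtain y' where y': "shadowed f \<epsilon> ys y'" using dl(2) po_ys by blast
  have y1c: "dist (iter f n y1) (iter f n z) < c n" if "0 \<le> n" for n
  proof -
    have "norm (xs n - iter f n y1) < \<epsilon> (xs n)" using y1 by (simp add: shadowed_def)
    then have "dist (a n) (iter f n y1) < \<epsilon> (a n)" using that v0 by (simp add: xs_def dist_norm)
    then show ?thesis using K2 that unfolding a_def by blast
  qed
  have "y1 = z"
  proof (rule rigidity[OF h, where c=c and T="{n. 0 \<le> n}"])
    show "\<forall>n. \<forall>w. 1 / (\<bar>real_of_int n\<bar> + 1) \<le> dist w z \<and> dist w z \<le> 1 \<longrightarrow> c n \<le> dist (iter f n w) (iter f n z)"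
      using c by blast
    show "\<forall>N::nat. \<exists>n\<in>{n. 0 \<le> n}. real N \<le> \<bar>real_of_int n\<bar>"
    proof
      fix N :: nat
      show "\<exists>n\<in>{n. 0 \<le> n}. real N \<le> \<bar>real_of_int n\<bar>" by (rule bexI[of _ "int N"]) auto
    qed
    show "\<forall>n\<in>{n. 0 \<le> n}. dist (iter f n y1) (iter f n z) < c n" using y1c by blast
    have "dist y1 z < c 0" using y1c[of 0] by simp
    moreover have "c 0 \<le> 1" using c by blast
    ultimately show "dist y1 z \<le> 1" by linarith
  qed
  have S1: "dist (ys n) (a n) < \<epsilon> (ys n)" if "n < v" for n
  proof -
    have "norm (xs n - iter f n y1) < \<epsilon> (xs n)" using y1 by (simp add: shadowed_def)
    then show ?thesis using that \<open>y1 = z\<close> by (simp add: xs_def a_def dist_norm)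
  qed
  have S2: "dist (ys n) (iter f n y') < \<epsilon> (ys n)" for n
    using y' by (simp add: shadowed_def dist_norm)
  have ysP: "ys (n + P) = ys n" for n unfolding ys_def \<phi>_def using phi_P[of u n P] by simp
  have per: "iter f P y' = y'"
  proof -
    have "y' = iter f P y'"
    proof (rule EXP, intro allI exI conjI)
      fix t
      show "dist (iter f t y') (ys t) \<le> \<epsilon> (ys t)" using S2[of t] by (simp add: dist_commute)
      have "iter f t (iter f P y') = iter f (t + P) y'" using iter_add[OF h, of t P y'] by simp
      moreover have "dist (ys t) (iter f (t + P) y') < \<epsilon> (ys t)" using S2[of "t + P"] ysP[of t] by simp
      moreover have "dist (iter f t y') (iter f (t + P) y') \<le> dist (iter f t y') (ys t) + dist (ys t) (iter f (t + P) y')"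
        by (rule dist_triangle)
      ultimately show "dist (iter f t y') (iter f t (iter f P y')) \<le> 2 * \<epsilon> (ys t)"
        using S2[of t] by (simp add: dist_commute)
    qed
    then show ?thesis by simp
  qed
  have sub: "\<exists>s. x = iter f s y'" if x: "x \<in> alpha_limit f z" for x
  proof -
    obtain r' where r': "filterlim r' at_bot sequentially" "(\<lambda>k. iter f (r' k) z) \<longlonglongrightarrow> x"
      using x unfolding alpha_limit_def by blast
    have "\<exists>s\<in>{u..<v}. infinite {k. \<phi> (r' k) = s}"
    proof (rule ccontr)
      assume "\<not> ?thesis"
      then have "finite (\<Union>s\<in>{u..<v}. {k. \<phi> (r' k) = s})" by auto
      moreover have "(\<Union>s\<in>{u..<v}. {k. \<phi> (r' k) = s}) = UNIV" using phib by auto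
      ultimately show False by simp
    qed
    then obtain s where s: "infinite {k. \<phi> (r' k) = s}" by blast
    from infinite_enumerate[OF s] obtain \<sigma> :: "nat \<Rightarrow> nat" where
      \<sigma>: "strict_mono \<sigma>" "\<forall>n. \<sigma> n \<in> {k. \<phi> (r' k) = s}" by (elim exE conjE)
    have lim\<sigma>: "(\<lambda>k. a (r' (\<sigma> k))) \<longlonglongrightarrow> x"
      using LIMSEQ_subseq_LIMSEQ[OF r'(2) \<sigma>(1)] unfolding a_def o_def by simp
    have "filterlim \<sigma> sequentially sequentially" using \<sigma>(1) by (rule filterlim_subseq)
    from filterlim_compose[OF r'(1) this]
    have bot\<sigma>: "filterlim (\<lambda>k. r' (\<sigma> k)) at_bot sequentially" .
    define y'' where "y'' = iter f s y'"
    have "x = y''"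
    proof (rule EXP, intro allI exI conjI)
      fix t
      define b where "b = ys (s + t)"
      have lt: "(\<lambda>k. a (r' (\<sigma> k) + t)) \<longlonglongrightarrow> iter f t x"
        using iter_tendsto[OF h lim\<sigma>, of t] unfolding a_def by (simp add: iter_add[OF h] add.commute)
      have "eventually (\<lambda>k. r' (\<sigma> k) + t \<le> v - 1) sequentially"
        using at_bot_shift[OF bot\<sigma>, of t] unfolding filterlim_at_bot by blast
      then have evt: "eventually (\<lambda>k. r' (\<sigma> k) + t < v) sequentially"
        by (rule eventually_mono) simp
      have "eventually (\<lambda>k. dist (a (r' (\<sigma> k) + t)) b \<le> \<epsilon> b) sequentially"
      proof (rule eventually_mono[OF evt])
        fix k assume k: "r' (\<sigma> k) + t < v"
        have "\<phi> (r' (\<sigma> k)) = s" using \<sigma>(2) by blast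
        then have "\<phi> (r' (\<sigma> k) + t) = \<phi> (s + t)"
          unfolding \<phi>_def using phi_shift[of u "r' (\<sigma> k)" t P] by simp
        then have "ys (r' (\<sigma> k) + t) = b" unfolding b_def ys_def by simp
        then show "dist (a (r' (\<sigma> k) + t)) b \<le> \<epsilon> b" using S1[OF k] by (simp add: dist_commute)
      qed
      then show d1: "dist (iter f t x) b \<le> \<epsilon> b"
        using tendsto_le[OF sequentially_bot tendsto_const tendsto_dist[OF lt tendsto_const]] by blast
      have "iter f t y'' = iter f (s + t) y'" unfolding y''_def using iter_add[OF h, of t s y'] by (simp add: add.commute)
      then have "dist b (iter f t y'') < \<epsilon> b" using S2[of "s + t"] unfolding b_def by simp
      then show "dist (iter f t x) (iter f t y'') \<le> 2 * \<epsilon> b"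
        using d1 dist_triangle[of "iter f t x" "iter f t y''" b] by linarith
    qed
    then show ?thesis unfolding y''_def by blast
  qed
  obtain s0 where s0: "x0 = iter f s0 y'" using sub[OF x0] by blast
  have "alpha_limit f z = orbit f y'"
  proof
    show "alpha_limit f z \<subseteq> orbit f y'" using sub unfolding orbit_def by blast
    show "orbit f y' \<subseteq> alpha_limit f z"
    proof
      fix q assume "q \<in> orbit f y'"
      then obtain k where k: "q = iter f k y'" unfolding orbit_def by blast
      have "iter f (k - s0) x0 = q" unfolding s0 k using iter_add[OF h, of "k - s0" s0 y'] by simp
      then show "q \<in> alpha_limit f z" using alpha_invariant[OF h x0] by metis
    qed
  qed
  moreover have "periodic_point f y'"
    unfolding periodic_point_def using per Ppos
    by (intro exI[of _ "nat P"]) (simp add: iter_def)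
  ultimately show ?thesis by blast
qed


theorem mainTheorem5:
  fixes f :: "real^2 \<Rightarrow> real^2" and z :: "real^2"
  assumes "topologically_anosov f"
    and "omega_limit f z = {}"
  shows "\<not> bounded (alpha_limit f z) \<or>
         (\<exists>p. periodic_point f p \<and> alpha_limit f z = orbit f p)"
proof -
  have "alpha_limit f z \<noteq> {}" using no_double_escape[OF assms] by blast
  then obtain x0 where "x0 \<in> alpha_limit f z" by blast
  then show ?thesis using case_B[OF assms] by blast
qed

end
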